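(* After the change of variables $g=g(\bar f,\bar g)$ given by relation (B), the curve in $(\bar f,\bar g)$ defined by $L_{1u}=0$ passes through the points $\bar Q(z)$ and $\bar Q(z/q)$, where $\bar Q(u)=(\bar f,\bar g)$ is defined by $\bar f=\bar f(u)$ and $$\frac{\bar g-\bar g(u)}{\bar g-\bar g(\frac{h_1}{qu})}=\frac{\bar Y(qu)}{\bar Y(u)},$$ for $u=z$ and $u=z/q$.
   Context: Let $h_1,h_2,u_1,\dots,u_8$ be generic nonzero complex parameters, $z$ generic, and $q=h_1^2h_2^2/(u_1\cdots u_8)$. Put $f(u)=u+h_1/u$, $g(u)=u+h_2/u$, $\bar f(u)=u+\frac{h_1}{qu}$, $\bar g(u)=u+\frac{h_2q}{u}$. Let $\varphi_u=(\bar f-g)\big(\frac{q\bar f}{h_1}-\frac{g}{h_2}\big)-(\frac{h_1}{q}-h_2)\big(\frac q{h_1}-\frac1{h_2}\big)$. Let $U(z)=\prod_{i=1}^8(z-u_i)=\sum_{i=0}^8(-1)^i m_{8-i}z^i$ (so $m_0=1$, $m_8=h_1^2h_2^2/q$). For a parameter $h$ define polynomials in a variable $x$: $P_n(h,x)=m_0x^4-m_1x^3+(m_2-3hm_0-h^{-3}m_8)x^2+(2hm_1-m_3+h^{-2}m_7)x+(h^2m_0-hm_2+m_4-h^{-1}m_6+h^{-2}m_8)$, $P_d(h,x)=m_8x^4-hm_7x^3+(h^2m_6-3hm_8-h^5m_0)x^2+(2h^2m_7-h^3m_5+h^5m_1)x+(h^6m_0-h^5m_2+h^4m_4-h^3m_6+h^2m_8)$.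 Define, for variables $f_0,f,g$, $V(f_0,f)=q\Big[(f_0-g)(f-g)-\big(\tfrac{h_1}{q}-h_2\big)(h_1-h_2)\tfrac1{h_2}\Big]P_d(h_2,g)-h_1^2h_2^4\Big[\big(\tfrac{f_0q}{h_1}-\tfrac{g}{h_2}\big)\big(\tfrac{f}{h_1}-\tfrac{g}{h_2}\big)-\big(\tfrac{q}{h_1}-\tfrac1{h_2}\big)\big(\tfrac1{h_1}-\tfrac1{h_2}\big)h_2\Big]P_n(h_2,g)$ (it also depends on $g$). For a function $\bar Y$ of $z$ and variables $(\bar f,g)$ define $$L_{1u}=\frac{U(\frac zq)}{(z^2-h_1q^2)\{\bar f-\bar f(\frac zq)\}}\Big[\bar Y(\tfrac zq)-\frac{z^8}{h_1^4q^4}\frac{U(\frac{h_1}{z})}{U(\frac zq)}\frac{g-g(\frac zq)}{g-g(\frac{h_1}{z})}\bar Y(z)\Big]+\frac{z^8U(\frac{h_1}{qz})}{(qz^2-h_1)h_1^4\{\bar f-\bar f(z)\}}\Big[\bar Y(qz)-\frac{h_1^4}{q^4z^8}\frac{U(z)}{U(\frac{h_1}{qz})}\frac{g-g(\frac{h_1}{qz})}{g-g(z)}\bar Y(z)\Big]+\frac{(h_1-h_2q)z^2(z^2-h_1)V(\bar f,f(z))}{h_1^3h_2^3q^5\,g\,\varphi_u\{g-g(\frac{h_1}{z})\}\{g-g(z)\}}\bar Y(z).$$ Relation (B), defining a birational correspondence $g\leftrightarrow\bar g$ depending on $\bar f$: $$\frac{(\bar f-\bar g)(\bar f-g)-(\frac{h_1}{q}-h_2q)(\frac{h_1}{q}-h_2)\frac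 q{h_1}}{(\frac{\bar fq}{h_1}-\frac{\bar g}{h_2q})(\frac{\bar fq}{h_1}-\frac g{h_2})-(\frac q{h_1}-\frac1{h_2q})(\frac q{h_1}-\frac1{h_2})\frac{h_1}q}=\frac{h_1^4h_2^2}{q^3}\frac{P_n(\frac{h_1}q,\bar f)}{P_d(\frac{h_1}q,\bar f)}.$$ *)

theory Defs
  imports Complex_Main
begin

text \<open>Parameters: h1 h2 :: complex, u :: nat => complex (only u 1, ..., u 8 are used).\<close>

definition qpar :: "complex \<Rightarrow> complex \<Rightarrow> (nat \<Rightarrow> complex) \<Rightarrow> complex" where
  "qpar h1 h2 u = h1^2 * h2^2 / (\<Prod>i\<in>{1..8}. u i)"

definition Upol :: "(nat \<Rightarrow> complex) \<Rightarrow> complex \<Rightarrow> complex" where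
  "Upol u x = (\<Prod>i\<in>{1..8}. (x - u i))"

text \<open>Elementary symmetric functions: U(x) = sum_i (-1)^i m_(8-i) x^i.\<close>
definition msym :: "(nat \<Rightarrow> complex) \<Rightarrow> nat \<Rightarrow> complex" where
  "msym u k = (\<Sum>S\<in>{S. S \<subseteq> {1..8} \<and> card S = k}. \<Prod>i\<in>S. u i)"

definition ffun :: "complex \<Rightarrow> complex \<Rightarrow> complex" where
  "ffun h1 v = v + h1 / v"
definition gfun :: "complex \<Rightarrow> complex \<Rightarrow> complex" where
  "gfun h2 v = v + h2 / v"
definition fbfun :: "complex \<Rightarrow> complex \<Rightarrow> complex \<Rightarrow> complex" where
  "fbfun h1 q v = v + h1 / (q * v)"
definition gbfun :: "complex \<Rightarrow> complex \<Rightarrow> complex \<Rightarrow> complex" where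
  "gbfun h2 q v = v + h2 * q / v"

definition phi_u :: "complex \<Rightarrow> complex \<Rightarrow> complex \<Rightarrow> complex \<Rightarrow> complex \<Rightarrow> complex" where
  "phi_u h1 h2 q fb g = (fb - g) * (q * fb / h1 - g / h2) - (h1 / q - h2) * (q / h1 - 1 / h2)"

definition Pn :: "(nat \<Rightarrow> complex) \<Rightarrow> complex \<Rightarrow> complex \<Rightarrow> complex" where
  "Pn u h x =
     msym u 0 * x^4 - msym u 1 * x^3
     + (msym u 2 - 3 * h * msym u 0 - msym u 8 / h^3) * x^2
     + (2 * h * msym u 1 - msym u 3 + msym u 7 / h^2) * x
     + (h^2 * msym u 0 - h * msym u 2 + msym u 4 - msym u 6 / h + msym u 8 / h^2)"

definition Pd :: "(nat \<Rightarrow> complex) \<Rightarrow> complex \<Rightarrow> complex \<Rightarrow> complex" where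
  "Pd u h x =
     msym u 8 * x^4 - h * msym u 7 * x^3
     + (h^2 * msym u 6 - 3 * h * msym u 8 - h^5 * msym u 0) * x^2
     + (2 * h^2 * msym u 7 - h^3 * msym u 5 + h^5 * msym u 1) * x
     + (h^6 * msym u 0 - h^5 * msym u 2 + h^4 * msym u 4 - h^3 * msym u 6 + h^2 * msym u 8)"

definition Vfun :: "complex \<Rightarrow> complex \<Rightarrow> (nat \<Rightarrow> complex) \<Rightarrow> complex \<Rightarrow> complex \<Rightarrow> complex \<Rightarrow> complex" where
  "Vfun h1 h2 u g f0 f =
     (let q = qpar h1 h2 u in
      q * ((f0 - g) * (f - g) - (h1 / q - h2) * (h1 - h2) * (1 / h2)) * Pd u h2 g
      - h1^2 * h2^4 * ((f0 * q / h1 - g / h2) * (f / h1 - g / h2)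
                       - (q / h1 - 1 / h2) * (1 / h1 - 1 / h2) * h2) * Pn u h2 g)"

text \<open>The three summands of L_1u: the two bracketed terms (without the pole factors
  1/(fb - fbar(z/q)) and 1/(fb - fbar(z))) and the third term.\<close>
definition L1u_A :: "complex \<Rightarrow> complex \<Rightarrow> (nat \<Rightarrow> complex) \<Rightarrow> complex \<Rightarrow> (complex \<Rightarrow> complex) \<Rightarrow> complex \<Rightarrow> complex" where
  "L1u_A h1 h2 u z Y g =
     (let q = qpar h1 h2 u in
      Upol u (z / q) / (z^2 - h1 * q^2) *
      (Y (z / q) - z^8 / (h1^4 * q^4) * (Upol u (h1 / z) / Upol u (z / q))
                   * ((g - gfun h2 (z / q)) / (g - gfun h2 (h1 / z))) * Y z))"

definition L1u_B :: "complex \<Rightarrow> complex \<Rightarrow> (nat \<Rightarrow> complex) \<Rightarrow> complex \<Rightarrow> (complex \<Rightarrow> complex) \<Rightarrow> complex \<Rightarrow> complex" where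
  "L1u_B h1 h2 u z Y g =
     (let q = qpar h1 h2 u in
      z^8 * Upol u (h1 / (q * z)) / ((q * z^2 - h1) * h1^4) *
      (Y (q * z) - h1^4 / (q^4 * z^8) * (Upol u z / Upol u (h1 / (q * z)))
                   * ((g - gfun h2 (h1 / (q * z))) / (g - gfun h2 z)) * Y z))"

definition L1u_C :: "complex \<Rightarrow> complex \<Rightarrow> (nat \<Rightarrow> complex) \<Rightarrow> complex \<Rightarrow> (complex \<Rightarrow> complex) \<Rightarrow> complex \<Rightarrow> complex \<Rightarrow> complex" where
  "L1u_C h1 h2 u z Y fb g =
     (let q = qpar h1 h2 u in
      (h1 - h2 * q) * z^2 * (z^2 - h1) * Vfun h1 h2 u g fb (ffun h1 z)
      / (h1^3 * h2^3 * q^5 * g * phi_u h1 h2 q fb g * (g - gfun h2 (h1 / z)) * (g - gfun h2 z))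
      * Y z)"

definition L1u :: "complex \<Rightarrow> complex \<Rightarrow> (nat \<Rightarrow> complex) \<Rightarrow> complex \<Rightarrow> (complex \<Rightarrow> complex) \<Rightarrow> complex \<Rightarrow> complex \<Rightarrow> complex" where
  "L1u h1 h2 u z Y fb g =
     (let q = qpar h1 h2 u in
      L1u_A h1 h2 u z Y g / (fb - fbfun h1 q (z / q))
      + L1u_B h1 h2 u z Y g / (fb - fbfun h1 q z)
      + L1u_C h1 h2 u z Y fb g)"

text \<open>The curve L_1u = 0 with the poles in fb cleared, i.e.
  (fb - fbar z) (fb - fbar (z/q)) L_1u, written without division by these factors.\<close>
definition L1u_curve :: "complex \<Rightarrow> complex \<Rightarrow> (nat \<Rightarrow> complex) \<Rightarrow> complex \<Rightarrow> (complex \<Rightarrow> complex) \<Rightarrow> complex \<Rightarrow> complex \<Rightarrow> complex" where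
  "L1u_curve h1 h2 u z Y fb g =
     (let q = qpar h1 h2 u in
      (fb - fbfun h1 q z) * L1u_A h1 h2 u z Y g
      + (fb - fbfun h1 q (z / q)) * L1u_B h1 h2 u z Y g
      + (fb - fbfun h1 q z) * (fb - fbfun h1 q (z / q)) * L1u_C h1 h2 u z Y fb g)"

lemma L1u_curve_eq:
  assumes "fb \<noteq> fbfun h1 (qpar h1 h2 u) z" "fb \<noteq> fbfun h1 (qpar h1 h2 u) (z / qpar h1 h2 u)"
  shows "L1u_curve h1 h2 u z Y fb g
        = (fb - fbfun h1 (qpar h1 h2 u) z) * (fb - fbfun h1 (qpar h1 h2 u) (z / qpar h1 h2 u))
          * L1u h1 h2 u z Y fb g"
proof -
  have aux: "(x - a) * A + (x - b) * B + (x - a) * (x - b) * C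
           = (x - a) * (x - b) * (A / (x - b) + B / (x - a) + C)"
    if "x \<noteq> a" "x \<noteq> b" for x a b A B C :: complex
  proof -
    have "x - a \<noteq> 0" "x - b \<noteq> 0" using that by auto
    then show ?thesis by (simp add: distrib_left mult.assoc mult.left_commute)
  qed
  show ?thesis
    using aux[OF assms] unfolding L1u_curve_def L1u_def Let_def by simp
qed

definition relB_num :: "complex \<Rightarrow> complex \<Rightarrow> complex \<Rightarrow> complex \<Rightarrow> complex \<Rightarrow> complex \<Rightarrow> complex" where
  "relB_num h1 h2 q fb gb g =
     (fb - gb) * (fb - g) - (h1 / q - h2 * q) * (h1 / q - h2) * (q / h1)"
definition relB_den :: "complex \<Rightarrow> complex \<Rightarrow> complex \<Rightarrow> complex \<Rightarrow> complex \<Rightarrow> complex \<Rightarrow> complex" where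
  "relB_den h1 h2 q fb gb g =
     (fb * q / h1 - gb / (h2 * q)) * (fb * q / h1 - g / h2) - (q / h1 - 1 / (h2 * q)) * (q / h1 - 1 / h2) * (h1 / q)"

definition relB :: "complex \<Rightarrow> complex \<Rightarrow> (nat \<Rightarrow> complex) \<Rightarrow> complex \<Rightarrow> complex \<Rightarrow> complex \<Rightarrow> bool" where
  "relB h1 h2 u fb gb g =
     (let q = qpar h1 h2 u in
      relB_den h1 h2 q fb gb g \<noteq> 0 \<and> Pd u (h1 / q) fb \<noteq> 0 \<and>
      relB_num h1 h2 q fb gb g / relB_den h1 h2 q fb gb g
        = h1^4 * h2^2 / q^3 * (Pn u (h1 / q) fb / Pd u (h1 / q) fb))"

end

theory Submission
  imports Defs
begin

lemma vieta_gen: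
  fixes x :: complex
  shows "Upol u x = (\<Sum>k\<in>{0..8}. (-1)^k * msym u k * x^(8-k))"
proof -
  have "Upol u x = (\<Prod>i\<in>{1..8::nat}. (- u i) + x)" unfolding Upol_def by simp
  also have "\<dots> = (\<Sum>X\<in>Pow {1..8::nat}. (\<Prod>i\<in>X. - u i) * (\<Prod>i\<in>{1..8}-X. x))"
    by (rule prod_add) simp
  also have "\<dots> = (\<Sum>X\<in>Pow {1..8::nat}. (-1)^card X * x^(8 - card X) * (\<Prod>i\<in>X. u i))"
  proof (rule sum.cong[OF refl])
    fix X assume X: "X \<in> Pow {1..8::nat}"
    hence fX: "finite X" by (meson PowD finite_atLeastAtMost finite_subset)
    have "card ({1..8::nat} - X) = 8 - card X" using X fX by (simp add: card_Diff_subset)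
    moreover have "(\<Prod>i\<in>X. - u i) = (-1)^card X * (\<Prod>i\<in>X. u i)"
      by (simp add: prod_uminus)  
    ultimately show "(\<Prod>i\<in>X. - u i) * (\<Prod>i\<in>{1..8}-X. x) = (-1)^card X * x^(8 - card X) * (\<Prod>i\<in>X. u i)"
      by simp
  qed
  also have "\<dots> = (\<Sum>k\<in>{0..8}. \<Sum>X\<in>{X\<in>Pow {1..8::nat}. card X = k}. (-1)^card X * x^(8 - card X) * (\<Prod>i\<in>X. u i))"
  proof (rule sum.group[symmetric])
    show "card ` Pow {1..8::nat} \<subseteq> {0..8}"
    proof
      fix y assume "y \<in> card ` Pow {1..8::nat}"
      then obtain X where X: "X \<subseteq> {1..8::nat}" "y = card X" by auto
      then show "y \<in> {0..8}" using card_mono[of "{1..8::nat}" X] by simp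
    qed
  qed auto
  also have "\<dots> = (\<Sum>k\<in>{0..8}. (-1)^k * msym u k * x^(8-k))"
  proof (rule sum.cong[OF refl])
    fix k
    have "(\<Sum>X\<in>{X\<in>Pow {1..8::nat}. card X = k}. (-1)^card X * x^(8 - card X) * (\<Prod>i\<in>X. u i))
       = (\<Sum>X\<in>{X\<in>Pow {1..8::nat}. card X = k}. (-1)^k * x^(8 - k) * (\<Prod>i\<in>X. u i))"
      by (rule sum.cong) auto
    also have "\<dots> = (-1)^k * x^(8 - k) * msym u k"
      unfolding msym_def by (simp add: sum_distrib_left Pow_def)
    finally show "(\<Sum>X\<in>{X\<in>Pow {1..8::nat}. card X = k}. (-1)^card X * x^(8 - card X) * (\<Prod>i\<in>X. u i)) = (-1)^k * msym u k * x^(8-k)"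
      by simp
  qed
  finally show ?thesis .
qed

lemma vieta:
  fixes x :: complex
  shows "Upol u x = msym u 0 * x^8 - msym u 1 * x^7 + msym u 2 * x^6 - msym u 3 * x^5 + msym u 4 * x^4
     - msym u 5 * x^3 + msym u 6 * x^2 - msym u 7 * x + msym u 8"
  unfolding vieta_gen by (simp add: numeral_eq_Suc atLeast0AtMost atMost_Suc)

lemma Pn_h:
  fixes h x m0 m1 m2 m3 m4 m6 m7 m8 :: complex
  assumes "h \<noteq> 0"
  shows "h^3 * (m0 * x^4 - m1 * x^3
     + (m2 - 3 * h * m0 - m8 / h^3) * x^2
     + (2 * h * m1 - m3 + m7 / h^2) * x
     + (h^2 * m0 - h * m2 + m4 - m6 / h + m8 / h^2))
   = h^3 * (m0 * x^4 - m1 * x^3 + (m2 - 3 * h * m0) * x^2 + (2 * h * m1 - m3) * x + (h^2 * m0 - h * m2 + m4))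
     - m8 * x^2 + h * m7 * x - h^2 * m6 + h * m8"
  using assms by (simp add: field_simps power2_eq_square power3_eq_cube)

lemma Pn_poly:
  fixes v s m0 m1 m2 m3 m4 m5 m6 m7 m8 :: complex
  shows "(v - s) * ((v*s)^3 * (m0 * (v+s)^4 - m1 * (v+s)^3 + (m2 - 3 * (v*s) * m0) * (v+s)^2 + (2 * (v*s) * m1 - m3) * (v+s) + ((v*s)^2 * m0 - (v*s) * m2 + m4))
     - m8 * (v+s)^2 + (v*s) * m7 * (v+s) - (v*s)^2 * m6 + (v*s) * m8)
   = s^3 * (m0 * v^8 - m1 * v^7 + m2 * v^6 - m3 * v^5 + m4 * v^4 - m5 * v^3 + m6 * v^2 - m7 * v + m8)
   - v^3 * (m0 * s^8 - m1 * s^7 + m2 * s^6 - m3 * s^5 + m4 * s^4 - m5 * s^3 + m6 * s^2 - m7 * s + m8)"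
  by algebra
lemma ident_num:
  fixes v s q h2 gb g :: complex
  assumes "v\<noteq>0" "s\<noteq>0" "q\<noteq>0" "h2\<noteq>0"
  shows "(v-s)*relB_num (q*v*s) h2 q (v+s) gb g
    = v*((gb - gbfun h2 q v)*(g - gfun h2 v)) - s*((gb - gbfun h2 q s)*(g - gfun h2 s))"
  using assms unfolding relB_num_def gbfun_def gfun_def
  by (simp add: field_simps)

lemma ident_den:
  fixes v s q h2 gb g :: complex
  assumes "v\<noteq>0" "s\<noteq>0" "q\<noteq>0" "h2\<noteq>0"
  shows "(v-s)*relB_den (q*v*s) h2 q (v+s) gb g
    = (v*((gb - gbfun h2 q s)*(g - gfun h2 s)) - s*((gb - gbfun h2 q v)*(g - gfun h2 v)))/(h2^2*q)"
  using assms unfolding relB_den_def gbfun_def gfun_def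
  by (simp add: field_simps) (simp add: algebra_simps power2_eq_square)

lemma pencil:
  fixes v s q h2 gb g Uv Us Pnv Pdv :: complex
  assumes nz: "v\<noteq>0" "s\<noteq>0" "q\<noteq>0" "h2\<noteq>0" and vs: "v \<noteq> s"
    and Pn: "(v-s)*Pnv = Uv/v^3 - Us/s^3" and Pd: "(v-s)*Pdv = v^5*Us - s^5*Uv" and Pdnz: "Pdv \<noteq> 0"
  shows "(v^5*Us - s^5*Uv)*(v-s)*(relB_num (q*v*s) h2 q (v+s) gb g
            - (q*v*s)^4*h2^2/q^3*(Pnv/Pdv) * relB_den (q*v*s) h2 q (v+s) gb g)
     = (v^2-s^2)*(v^4*Us*((gb - gbfun h2 q v)*(g - gfun h2 v)) - s^4*Uv*((gb - gbfun h2 q s)*(g - gfun h2 s)))"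
proof -
  define X where "X = (gb - gbfun h2 q v)*(g - gfun h2 v)"
  define Y where "Y = (gb - gbfun h2 q s)*(g - gfun h2 s)"
  define D where "D = v^5*Us - s^5*Uv"
  have vs': "v - s \<noteq> 0" using vs by simp
  have Pnv: "Pnv = (Uv/v^3 - Us/s^3)/(v-s)" using Pn vs' by (simp add: field_simps)
  have "D = (v-s)*Pdv" using Pd D_def by simp
  hence Dnz: "D \<noteq> 0" using Pdnz vs' by simp
  have Pdv: "Pdv = D/(v-s)" using \<open>D = (v-s)*Pdv\<close> vs' by simp
  have K: "(q*v*s)^4*h2^2/q^3*(Pnv/Pdv) = (h2^2*q) * ((v*s)^4 * (Uv/v^3 - Us/s^3) / D)"
    unfolding Pnv Pdv using nz vs' Dnz by (simp add: field_simps) algebra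
  have "D*(v-s)*(relB_num (q*v*s) h2 q (v+s) gb g
            - (q*v*s)^4*h2^2/q^3*(Pnv/Pdv) * relB_den (q*v*s) h2 q (v+s) gb g)
      = D*((v-s)*relB_num (q*v*s) h2 q (v+s) gb g)
        - (h2^2*q) * ((v*s)^4 * (Uv/v^3 - Us/s^3)) * ((v-s)*relB_den (q*v*s) h2 q (v+s) gb g)"
    unfolding K using Dnz by (simp add: field_simps)
  also have "\<dots> = D*(v*X - s*Y) - ((v*s)^4 * (Uv/v^3 - Us/s^3)) * (v*Y - s*X)"
    unfolding ident_num[OF nz] ident_den[OF nz] X_def Y_def using nz by (simp add: field_simps) algebra
  also have "\<dots> = (v^2-s^2)*(v^4*Us*X - s^4*Uv*Y)"
    unfolding D_def using nz by (simp add: field_simps) algebra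
  finally show ?thesis unfolding D_def X_def Y_def .
qed


lemma den_affine:
  assumes "h1 \<noteq> 0" "h2 \<noteq> 0" "q \<noteq> 0"
  shows "relB_den h1 h2 q fb gb g' = relB_den h1 h2 q fb gb g - (fb * q / h1 - gb / (h2 * q)) * (g' - g) / h2"
  unfolding relB_den_def using assms by (simp add: field_simps)

lemma core:
  fixes h1 h2 q v s gb g Uv Us Pnv Pdv :: complex
  assumes nz: "v\<noteq>0" "s\<noteq>0" "q\<noteq>0" "h2\<noteq>0" and h1: "h1 = q*v*s"
    and Pn: "(v-s)*Pnv = Uv/v^3 - Us/s^3" and Pd: "(v-s)*Pdv = v^5*Us - s^5*Uv" and Pdnz: "Pdv \<noteq> 0"
    and den: "relB_den h1 h2 q (v+s) gb g \<noteq> 0"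
    and rel: "relB_num h1 h2 q (v+s) gb g / relB_den h1 h2 q (v+s) gb g = h1^4*h2^2/q^3*(Pnv/Pdv)"
    and uniq: "\<forall>g'. relB_den h1 h2 q (v+s) gb g' \<noteq> 0 \<and> relB_num h1 h2 q (v+s) gb g' / relB_den h1 h2 q (v+s) gb g' = h1^4*h2^2/q^3*(Pnv/Pdv) \<longrightarrow> g' = g"
    and vsU: "v = s \<Longrightarrow> Uv = Us"
  shows "(gb - gbfun h2 q v)*(g - gfun h2 v)*q^4*v^8*Us = h1^4*Uv*((g - gfun h2 s)*(gb - gbfun h2 q s))"
proof (cases "v = s")
  case True
  then show ?thesis using vsU h1 by (simp add: algebra_simps power_mult_distrib)
next
  case False
  define K where "K = h1^4*h2^2/q^3*(Pnv/Pdv)"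
  define X where "X = (gb - gbfun h2 q v)*(g - gfun h2 v)"
  define Y where "Y = (gb - gbfun h2 q s)*(g - gfun h2 s)"
  have vs': "v - s \<noteq> 0" using False by simp
  have Dnz: "v^5*Us - s^5*Uv \<noteq> 0" using Pd[symmetric] Pdnz vs' by simp
  have P: "\<And>g'. (v^5*Us - s^5*Uv)*(v-s)*(relB_num h1 h2 q (v+s) gb g' - K * relB_den h1 h2 q (v+s) gb g')
     = (v^2-s^2)*(v^4*Us*((gb - gbfun h2 q v)*(g' - gfun h2 v)) - s^4*Uv*((gb - gbfun h2 q s)*(g' - gfun h2 s)))"
    unfolding h1 K_def h1 by (rule pencil[OF nz False Pn Pd Pdnz])
  have "relB_num h1 h2 q (v+s) gb g = K * relB_den h1 h2 q (v+s) gb g"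
    using rel den unfolding K_def by (simp add: field_simps)
  hence Z: "(v^2-s^2)*(v^4*Us*X - s^4*Uv*Y) = 0" using P[of g] unfolding X_def Y_def by simp
  show ?thesis
  proof (cases "v^2 = s^2")
    case False
    with Z have "v^4*Us*X = s^4*Uv*Y" by simp
    hence "q^4*v^4*(v^4*Us*X) = q^4*v^4*(s^4*Uv*Y)" by simp
    thus ?thesis unfolding X_def Y_def h1 by (simp add: algebra_simps power_mult_distrib)
  next
    case True
    have all: "relB_num h1 h2 q (v+s) gb g' = K * relB_den h1 h2 q (v+s) gb g'" for g'
      using P[of g'] True Dnz vs' by simp
    define A where "A = ((v+s) * q / h1 - gb / (h2 * q))"
    have d: "relB_den h1 h2 q (v+s) gb g' = relB_den h1 h2 q (v+s) gb g - A * (g' - g) / h2" for g'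
      unfolding A_def by (rule den_affine) (use nz h1 in auto)
    obtain g' where g': "g' \<noteq> g" "relB_den h1 h2 q (v+s) gb g' \<noteq> 0"
    proof (cases "relB_den h1 h2 q (v+s) gb (g+1) = 0")
      case True
      have "relB_den h1 h2 q (v+s) gb (g+2) \<noteq> 0"
      proof
        assume "relB_den h1 h2 q (v+s) gb (g+2) = 0"
        with True d[of "g+1"] d[of "g+2"] have "A = 0" using nz by (simp add: field_simps)
        with True d[of "g+1"] den show False by simp
      qed
      then show ?thesis using that[of "g+2"] by simp
    next
      case False
      then show ?thesis using that[of "g+1"] by simp
    qed
    have "relB_num h1 h2 q (v+s) gb g' / relB_den h1 h2 q (v+s) gb g' = K"
      using all[of g'] g'(2) by simp
    with uniq g' show ?thesis unfolding K_def by blast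
  qed
qed


lemma Pn_eq:
  fixes v s :: complex
  assumes "v \<noteq> 0" "s \<noteq> 0"
  shows "(v - s) * Pn u (v*s) (v+s) = Upol u v / v^3 - Upol u s / s^3"
proof -
  have vs: "v*s \<noteq> 0" using assms by simp
  have a: "(v*s)^3 * Pn u (v*s) (v+s) = (v*s)^3 * (msym u 0 * (v+s)^4 - msym u 1 * (v+s)^3 + (msym u 2 - 3 * (v*s) * msym u 0) * (v+s)^2 + (2 * (v*s) * msym u 1 - msym u 3) * (v+s) + ((v*s)^2 * msym u 0 - (v*s) * msym u 2 + msym u 4))
     - msym u 8 * (v+s)^2 + (v*s) * msym u 7 * (v+s) - (v*s)^2 * msym u 6 + (v*s) * msym u 8"
    unfolding Pn_def by (rule Pn_h[OF vs])
  have b: "(v-s) * ((v*s)^3 * Pn u (v*s) (v+s)) = s^3 * Upol u v - v^3 * Upol u s"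
    unfolding a vieta by (rule Pn_poly)
  show ?thesis using b assms by (simp add: field_simps)
qed

lemma Pd_poly:
  fixes v s m0 m1 m2 m3 m4 m5 m6 m7 m8 :: complex
  shows "(v - s) * (m8 * (v+s)^4 - (v*s) * m7 * (v+s)^3
     + ((v*s)^2 * m6 - 3 * (v*s) * m8 - (v*s)^5 * m0) * (v+s)^2
     + (2 * (v*s)^2 * m7 - (v*s)^3 * m5 + (v*s)^5 * m1) * (v+s)
     + ((v*s)^6 * m0 - (v*s)^5 * m2 + (v*s)^4 * m4 - (v*s)^3 * m6 + (v*s)^2 * m8))
   = v^5 * (m0 * s^8 - m1 * s^7 + m2 * s^6 - m3 * s^5 + m4 * s^4 - m5 * s^3 + m6 * s^2 - m7 * s + m8)
   - s^5 * (m0 * v^8 - m1 * v^7 + m2 * v^6 - m3 * v^5 + m4 * v^4 - m5 * v^3 + m6 * v^2 - m7 * v + m8)"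
  by algebra

lemma Pd_eq:
  fixes v s :: complex
  shows "(v - s) * Pd u (v*s) (v+s) = v^5 * Upol u s - s^5 * Upol u v"
  unfolding vieta Pd_def by (rule Pd_poly)

lemma finA:
  fixes Yq Yv a b c d q v Us Uv h1 :: complex
  assumes "Yq = Yv * (a/b)" "a*c*q^4*v^8*Us = h1^4*Uv*(d*b)" "b\<noteq>0" "c\<noteq>0" "Us\<noteq>0" "q\<noteq>0" "v\<noteq>0"
  shows "Yq - h1^4/(q^4*v^8)*(Uv/Us)*(d/c)*Yv = 0"
proof -
  have "Yq - h1^4/(q^4*v^8)*(Uv/Us)*(d/c)*Yv = Yv*(a*c*q^4*v^8*Us - h1^4*Uv*(d*b))/(b*c*q^4*v^8*Us)"
    using assms(1,3-) by (simp add: field_simps)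
  also have "\<dots> = 0" using assms(2) by simp
  finally show ?thesis .
qed

lemma finB:
  fixes Yz Yv a b c d q v Us Uv h1 z :: complex
  assumes "Yz = Yv * (a/b)" "a*c*q^4*v^8*Us = h1^4*Uv*(d*b)" "b\<noteq>0" "d\<noteq>0" "Uv\<noteq>0" "h1\<noteq>0" "q\<noteq>0" "z = q*v"
  shows "Yv - z^8/(h1^4*q^4)*(Us/Uv)*(c/d)*Yz = 0"
proof -
  have "z^8/(h1^4*q^4)*(Us/Uv)*(c/d)*Yz = Yv * ((a*c*q^4*v^8*Us)/(h1^4*Uv*(d*b)))"
    using assms(1,3-) by (simp add: field_simps power_mult_distrib)
  also have "\<dots> = Yv" using assms(2-) by simp
  finally show ?thesis by simp
qed

theorem lemma6:
  fixes h1 h2 z w fb gb g :: complex and u :: "nat \<Rightarrow> complex" and Y :: "complex \<Rightarrow> complex"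
  defines "q \<equiv> qpar h1 h2 u"
  assumes nz: "h1 \<noteq> 0" "h2 \<noteq> 0" "z \<noteq> 0" "\<forall>i\<in>{1..8}. u i \<noteq> 0"
    and gen_z: "z^2 \<noteq> h1 * q^2" "q * z^2 \<noteq> h1"
    and gen_U: "Upol u (z / q) \<noteq> 0" "Upol u (h1 / (q * z)) \<noteq> 0" "Upol u z \<noteq> 0" "Upol u (h1 / z) \<noteq> 0"
    and gen_f: "fbfun h1 q z \<noteq> fbfun h1 q (z / q)"
    and w: "w = z \<or> w = z / q"
    and Qf: "fb = fbfun h1 q w"
    and Qg_gen: "Y w \<noteq> 0" "gb \<noteq> gbfun h2 q (h1 / (q * w))"
                "gbfun h2 q w \<noteq> gbfun h2 q (h1 / (q * w))"
    and Qg: "(gb - gbfun h2 q w) / (gb - gbfun h2 q (h1 / (q * w))) = Y (q * w) / Y w"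
    and B: "relB h1 h2 u fb gb g"
    and B_unique: "\<forall>g'. relB h1 h2 u fb gb g' \<longrightarrow> g' = g"
    and gen_g: "g \<noteq> 0" "g \<noteq> gfun h2 z" "g \<noteq> gfun h2 (h1 / z)"
               "g \<noteq> gfun h2 (z / q)" "g \<noteq> gfun h2 (h1 / (q * z))"
               "phi_u h1 h2 q fb g \<noteq> 0"
  shows "L1u_curve h1 h2 u z Y fb g = 0"
proof -
  have prodnz: "(\<Prod>i\<in>{1..8}. u i) \<noteq> 0" using nz(4) by simp
  have qnz: "q \<noteq> 0" unfolding q_def qpar_def using nz prodnz by simp
  have wnz: "w \<noteq> 0" using w nz qnz by auto
  define v where "v = w"
  define s where "s = h1/(q*w)"
  have vnz: "v \<noteq> 0" and snz: "s \<noteq> 0" using wnz qnz nz unfolding v_def s_def by auto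
  have h1v: "h1 = q*v*s" unfolding v_def s_def using wnz qnz by simp
  have hq: "h1/q = v*s" unfolding h1v using qnz by simp
  have fbvs: "fb = v+s" unfolding Qf fbfun_def v_def s_def by simp
  have Bu: "relB_den h1 h2 q (v+s) gb g \<noteq> 0" "Pd u (v*s) (v+s) \<noteq> 0"
      "relB_num h1 h2 q (v+s) gb g / relB_den h1 h2 q (v+s) gb g
        = h1^4 * h2^2 / q^3 * (Pn u (v*s) (v+s) / Pd u (v*s) (v+s))"
    using B unfolding relB_def Let_def q_def[symmetric] hq fbvs by auto
  have uniq: "\<forall>g'. relB_den h1 h2 q (v+s) gb g' \<noteq> 0 \<and> relB_num h1 h2 q (v+s) gb g' / relB_den h1 h2 q (v+s) gb g' = h1^4*h2^2/q^3*(Pn u (v*s) (v+s) / Pd u (v*s) (v+s)) \<longrightarrow> g' = g"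
    using B_unique Bu(2) unfolding relB_def Let_def q_def[symmetric] hq fbvs by auto
  have CORE: "(gb - gbfun h2 q v)*(g - gfun h2 v)*q^4*v^8*Upol u s = h1^4*Upol u v*((g - gfun h2 s)*(gb - gbfun h2 q s))"
    by (rule core[OF vnz snz qnz nz(2) h1v Pn_eq[OF vnz snz] Pd_eq Bu(2) Bu(1) Bu(3) uniq]) simp
  have Gs: "gb - gbfun h2 q s \<noteq> 0" using Qg_gen(2) unfolding s_def by simp
  have QY: "Y (q*w) = Y w * ((gb - gbfun h2 q v)/(gb - gbfun h2 q s))"
    using Qg Qg_gen(1) unfolding v_def s_def by (simp add: field_simps)
  from w show ?thesis
  proof
    assume wz: "w = z"
    have sz: "s = h1/(q*z)" unfolding s_def wz ..
    have vz: "v = z" unfolding v_def wz ..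
    have LB: "L1u_B h1 h2 u z Y g = 0"
      unfolding L1u_B_def Let_def q_def[symmetric]
      using finA[OF QY[unfolded wz] CORE Gs _ _ qnz vnz, unfolded vz sz] gen_g gen_U by simp
    show ?thesis unfolding L1u_curve_def Let_def q_def[symmetric] Qf wz LB by simp
  next
    assume wz: "w = z/q"
    have sz: "s = h1/z" unfolding s_def wz using qnz by simp
    have vz: "v = z/q" unfolding v_def wz ..
    have qw: "q*w = z" unfolding wz using qnz by simp
    have LA: "L1u_A h1 h2 u z Y g = 0"
      unfolding L1u_A_def Let_def q_def[symmetric]
      using finB[OF QY[unfolded qw] CORE Gs _ _ nz(1) qnz, of z, unfolded vz sz] gen_g gen_U qnz by (simp add: wz)
    show ?thesis unfolding L1u_curve_def Let_def q_def[symmetric] Qf wz LA by simp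
  qed
qed

end
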